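(* Let $I=\langle N,M,V\rangle$ be an ordered instance of chores, let $i\in N$, and let $k$ be the maximum number of bundles of cardinality one in any MMS partition of $i$. Then $i$ has an MMS partition in which each of the chores $1,2,\dots,\min(n-1,k)$ forms a bundle of cardinality one.
   Context: An instance of chores $I=\langle N,M,V\rangle$ has agents $N=\{1,\dots,n\}$, chores $M=\{1,\dots,m\}$ and additive valuations $v_i$ with $v_i(\emptyset)=0$, $v_i(S)=\sum_{g\in S}v_i(\{g\})$ and $v_{ij}:=v_i(\{j\})\le 0$. It is ordered if $v_{ij}\le v_{i(j+1)}$ for all $i$ and $1\le j<m$. An allocation ($n$-partition) is an ordered $n$-tuple of pairwise disjoint, possibly empty subsets of $M$ with union $M$. The maximin share of $i$ is $\mu_i=\max_A\min_j v_i(A_j)$ over all allocations; an MMS partition of $i$ is an allocation $A$ with $v_i(A_j)\ge\mu_i$ for all $j$. *)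

theory Defs
  imports Complex_Main
begin

definition val :: "(nat \<Rightarrow> nat \<Rightarrow> real) \<Rightarrow> nat \<Rightarrow> nat set \<Rightarrow> real" where
  "val v i S = (\<Sum>g\<in>S. v i g)"

definition is_alloc :: "nat \<Rightarrow> nat \<Rightarrow> (nat \<Rightarrow> nat set) \<Rightarrow> bool" where
  "is_alloc n m A \<longleftrightarrow>
     (\<forall>j\<in>{1..n}. \<forall>j'\<in>{1..n}. j \<noteq> j' \<longrightarrow> A j \<inter> A j' = {}) \<and>
     (\<Union>j\<in>{1..n}. A j) = {1..m}"

definition mms :: "nat \<Rightarrow> nat \<Rightarrow> (nat \<Rightarrow> nat \<Rightarrow> real) \<Rightarrow> nat \<Rightarrow> real" where
  "mms n m v i = Max {Min ((\<lambda>j. val v i (A j)) ` {1..n}) | A. is_alloc n m A}"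

definition mms_partition :: "nat \<Rightarrow> nat \<Rightarrow> (nat \<Rightarrow> nat \<Rightarrow> real) \<Rightarrow> nat \<Rightarrow> (nat \<Rightarrow> nat set) \<Rightarrow> bool" where
  "mms_partition n m v i A \<longleftrightarrow> is_alloc n m A \<and> (\<forall>j\<in>{1..n}. val v i (A j) \<ge> mms n m v i)"

definition num_singletons :: "nat \<Rightarrow> (nat \<Rightarrow> nat set) \<Rightarrow> nat" where
  "num_singletons n A = card {j\<in>{1..n}. card (A j) = 1}"

definition chores_instance :: "nat \<Rightarrow> nat \<Rightarrow> (nat \<Rightarrow> nat \<Rightarrow> real) \<Rightarrow> bool" where
  "chores_instance n m v \<longleftrightarrow> n \<ge> 1 \<and> (\<forall>i\<in>{1..n}. \<forall>j\<in>{1..m}. v i j \<le> 0)"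

definition ordered_instance :: "nat \<Rightarrow> nat \<Rightarrow> (nat \<Rightarrow> nat \<Rightarrow> real) \<Rightarrow> bool" where
  "ordered_instance n m v \<longleftrightarrow> (\<forall>i\<in>{1..n}. \<forall>j. 1 \<le> j \<and> j < m \<longrightarrow> v i j \<le> v i (j+1))"

end

theory Submission
  imports Defs
begin

lemma ord_mono:
  assumes "ordered_instance n m v" "i \<in> {1..n}" "1 \<le> a" "a \<le> b" "b \<le> m"
  shows "v i a \<le> v i b"
proof -
  have "b \<le> m \<longrightarrow> v i a \<le> v i b" using assms(4)
  proof (induction b rule: dec_induct)
    case base then show ?case by simp
  next
    case (step b)
    show ?case
    proof
      assume "Suc b \<le> m"
      then have "v i b \<le> v i (b+1)" using assms(1,2,3) step(1) unfolding ordered_instance_def by auto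
      with step \<open>Suc b \<le> m\<close> show "v i a \<le> v i (Suc b)" by simp
    qed
  qed
  with assms(5) show ?thesis by simp
qed

lemma alloc_sub: "is_alloc n m A \<Longrightarrow> j \<in> {1..n} \<Longrightarrow> A j \<subseteq> {1..m}"
  unfolding is_alloc_def by blast

lemma mms_exists:
  assumes "n \<ge> 1" shows "\<exists>A. mms_partition n m v i A"
proof -
  let ?S = "{Min ((\<lambda>j. val v i (A j)) ` {1..n}) | A. is_alloc n m A}"
  have "?S \<subseteq> val v i ` Pow {1..m}"
  proof
    fix x assume "x \<in> ?S"
    then obtain A where A: "is_alloc n m A" "x = Min ((\<lambda>j. val v i (A j)) ` {1..n})" by blast
    have "x \<in> (\<lambda>j. val v i (A j)) ` {1..n}" unfolding A(2) using assms by (intro Min_in) auto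
    then obtain j where "j \<in> {1..n}" "x = val v i (A j)" by blast
    then show "x \<in> val v i ` Pow {1..m}" using alloc_sub[OF A(1)] by blast
  qed
  then have fin: "finite ?S" by (rule finite_subset) simp
  have "is_alloc n m (\<lambda>j. if j = 1 then {1..m} else {})" unfolding is_alloc_def using assms by auto
  hence ne: "?S \<noteq> {}" by blast
  have "mms n m v i \<in> ?S" unfolding mms_def using Max_in[OF fin ne] by simp
  then obtain A where A: "is_alloc n m A" "mms n m v i = Min ((\<lambda>j. val v i (A j)) ` {1..n})" by auto
  have "\<forall>j\<in>{1..n}. val v i (A j) \<ge> mms n m v i" using A(2) by simp
  with A(1) show ?thesis unfolding mms_partition_def by blast
qed

lemma sing_inj:
  assumes "is_alloc n m A"
  shows "inj_on (\<lambda>j. the_elem (A j)) {j\<in>{1..n}. card (A j) = 1}"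
proof
  fix x y assume x: "x \<in> {j\<in>{1..n}. card (A j) = 1}" and y: "y \<in> {j\<in>{1..n}. card (A j) = 1}"
    and e: "the_elem (A x) = the_elem (A y)"
  from x obtain a where a: "A x = {a}" by (auto simp: card_1_singleton_iff)
  from y obtain b where b: "A y = {b}" by (auto simp: card_1_singleton_iff)
  from e a b have "a = b" by simp
  show "x = y"
  proof (rule ccontr)
    assume "x \<noteq> y"
    then have "A x \<inter> A y = {}" using assms x y unfolding is_alloc_def by blast
    then show False using a b \<open>a = b\<close> by simp
  qed
qed

lemma sing_img:
  assumes "is_alloc n m A"
  shows "(\<lambda>j. the_elem (A j)) ` {j\<in>{1..n}. card (A j) = 1} \<subseteq> {1..m}"
proof
  fix x assume "x \<in> (\<lambda>j. the_elem (A j)) ` {j\<in>{1..n}. card (A j) = 1}"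
  then obtain j where j: "j \<in> {1..n}" "card (A j) = 1" "x = the_elem (A j)" by blast
  then obtain a where "A j = {a}" by (auto simp: card_1_singleton_iff)
  with j alloc_sub[OF assms j(1)] show "x \<in> {1..m}" by auto
qed

lemma swap_step:
  assumes ch: "chores_instance n m v" and ord: "ordered_instance n m v" and i: "i \<in> {1..n}"
    and P: "mms_partition n m v i A"
    and J: "{j\<in>{1..n}. card (A j) = 1} = J0" and cJ: "card J0 \<ge> Suc t"
    and S: "\<forall>c\<in>{1..t}. \<exists>j\<in>{1..n}. A j = {c}"
  shows "\<exists>A'. mms_partition n m v i A' \<and> {j\<in>{1..n}. card (A' j) = 1} = J0 \<and>
           (\<forall>c\<in>{1..Suc t}. \<exists>j\<in>{1..n}. A' j = {c})"
proof (cases "\<exists>j\<in>{1..n}. A j = {Suc t}")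
  case True
  have "\<forall>c\<in>{1..Suc t}. \<exists>j\<in>{1..n}. A j = {c}"
  proof
    fix c assume "c \<in> {1..Suc t}"
    then have "c \<in> {1..t} \<or> c = Suc t" by auto
    then show "\<exists>j\<in>{1..n}. A j = {c}" using True S by blast
  qed
  then show ?thesis using P J by blast
next
  case False
  let ?d = "Suc t"
  have al: "is_alloc n m A" using P unfolding mms_partition_def by simp
  have disj: "\<And>j j'. j\<in>{1..n} \<Longrightarrow> j'\<in>{1..n} \<Longrightarrow> j \<noteq> j' \<Longrightarrow> A j \<inter> A j' = {}"
    using al unfolding is_alloc_def by blast
  have un: "(\<Union>j\<in>{1..n}. A j) = {1..m}" using al unfolding is_alloc_def by blast
  let ?f = "\<lambda>j. the_elem (A j)"
  have inj: "inj_on ?f J0" using sing_inj[OF al] J by simp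
  have "card J0 \<le> card {1..m}" using card_inj_on_le[OF inj _ finite_atLeastAtMost] sing_img[OF al] J by blast
  then have dm: "?d \<in> {1..m}" using cJ by auto
  have "\<exists>j\<in>J0. ?f j \<notin> {1..t}"
  proof (rule ccontr)
    assume H: "\<not> (\<exists>j\<in>J0. ?f j \<notin> {1..t})"
    then have "?f ` J0 \<subseteq> {1..t}" by blast
    then have "card J0 \<le> card {1..t}" by (rule card_inj_on_le[OF inj]) simp
    then have "card J0 \<le> t" by simp
    then show False using cJ by simp
  qed
  then obtain jc where jc: "jc \<in> J0" "?f jc \<notin> {1..t}" by blast
  then obtain c where c: "A jc = {c}" and jcn: "jc \<in> {1..n}" using J by (auto simp: card_1_singleton_iff)
  have ct: "c \<notin> {1..t}" using jc c by simp
  have cm: "c \<in> {1..m}" using un c jcn by blast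
  have "c \<noteq> ?d" using False c jcn by blast
  with ct cm have dc: "?d < c" by auto
  obtain jd where jd: "jd \<in> {1..n}" "?d \<in> A jd" using dm un by blast
  have jdc: "jd \<noteq> jc" using jd c dc by auto
  have Ajd_sub: "A jd \<subseteq> {1..m}" using alloc_sub[OF al jd(1)] .
  have finA: "finite (A jd)" using Ajd_sub finite_subset by blast
  have cnot: "c \<notin> A jd" using disj[OF jd(1) jcn jdc] c by auto
  define A' where "A' = A(jc := {?d}, jd := insert c (A jd - {?d}))"
  have mu: "\<forall>j\<in>{1..n}. val v i (A j) \<ge> mms n m v i" using P unfolding mms_partition_def by simp
  have nonpos: "\<And>g. g \<in> {1..m} \<Longrightarrow> v i g \<le> 0" using ch i unfolding chores_instance_def by blast
  have valjd: "val v i (A jd) = v i ?d + val v i (A jd - {?d})"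
    unfolding val_def using finA jd(2) by (simp add: sum.remove)
  have "val v i (A jd - {?d}) \<le> 0" unfolding val_def
    using nonpos Ajd_sub by (intro sum_nonpos) auto
  moreover have mujd: "mms n m v i \<le> val v i (A jd)" using mu jd(1) by blast
  ultimately have v1: "v i ?d \<ge> mms n m v i" using valjd by linarith
  have vdc: "v i ?d \<le> v i c" using ord_mono[OF ord i, of ?d c] dc cm by simp
  have "val v i (insert c (A jd - {?d})) = v i c + val v i (A jd - {?d})"
    unfolding val_def using finA cnot by simp
  then have v2: "val v i (insert c (A jd - {?d})) \<ge> mms n m v i" using valjd vdc mujd by linarith
  have al': "is_alloc n m A'"
  proof -
    have "\<forall>j\<in>{1..n}. \<forall>j'\<in>{1..n}. j \<noteq> j' \<longrightarrow> A' j \<inter> A' j' = {}"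
    proof (intro ballI impI)
      fix j j' assume j: "j \<in> {1..n}" and j': "j' \<in> {1..n}" and ne: "j \<noteq> j'"
      have dj: "\<And>x. x \<noteq> jd \<Longrightarrow> x \<in> {1..n} \<Longrightarrow> ?d \<notin> A x" using disj jd by blast
      have cj: "\<And>x. x \<noteq> jc \<Longrightarrow> x \<in> {1..n} \<Longrightarrow> c \<notin> A x" using disj jcn c by blast
      show "A' j \<inter> A' j' = {}"
        using disj[OF j j' ne] dj[OF _ j] dj[OF _ j'] cj[OF _ j] cj[OF _ j'] ne jdc c
        unfolding A'_def by auto
    qed
    moreover have "(\<Union>j\<in>{1..n}. A' j) = {1..m}"
    proof -
      have "(\<Union>j\<in>{1..n}. A' j) = (\<Union>j\<in>{1..n}. A j)"
      proof
        show "(\<Union>j\<in>{1..n}. A' j) \<subseteq> (\<Union>j\<in>{1..n}. A j)"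
          using jd jcn c unfolding A'_def by auto
        show "(\<Union>j\<in>{1..n}. A j) \<subseteq> (\<Union>j\<in>{1..n}. A' j)"
        proof
          fix x assume "x \<in> (\<Union>j\<in>{1..n}. A j)"
          then obtain j where j: "j \<in> {1..n}" "x \<in> A j" by blast
          show "x \<in> (\<Union>j\<in>{1..n}. A' j)"
          proof (cases "j = jc \<or> j = jd")
            case True
            then show ?thesis
            proof
              assume "j = jc" then have "x = c" using j c by simp
              then show ?thesis using jd jdc unfolding A'_def by auto
            next
              assume "j = jd"
              then show ?thesis using j jd jcn jdc unfolding A'_def
                by (cases "x = ?d") auto
            qed
          next
            case False
            then show ?thesis using j unfolding A'_def by auto
          qed
        qed
      qed
      then show ?thesis using un by simp
    qed
    ultimately show ?thesis unfolding is_alloc_def by blast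
  qed
  have P': "mms_partition n m v i A'"
    unfolding mms_partition_def using al' mu v1 v2 jdc unfolding A'_def by (auto simp: val_def)
  have cpos: "card (A jd) > 0" using finA jd(2) card_gt_0_iff by blast
  have cardeq: "\<And>j. card (A' j) = card (A j)"
  proof -
    fix j
    show "card (A' j) = card (A j)"
      using c finA cnot jd(2) jdc cpos unfolding A'_def
      by (auto simp: card_insert_if card_Diff_singleton Suc_diff_1 card_gt_0_iff)
  qed
  have J': "{j\<in>{1..n}. card (A' j) = 1} = J0" using J cardeq by simp
  have S': "\<forall>x\<in>{1..Suc t}. \<exists>j\<in>{1..n}. A' j = {x}"
  proof
    fix x assume x: "x \<in> {1..Suc t}"
    show "\<exists>j\<in>{1..n}. A' j = {x}"
    proof (cases "x = ?d")
      case True then show ?thesis using jcn jdc unfolding A'_def by auto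
    next
      case False
      then have "x \<in> {1..t}" using x by auto
      then obtain j where j: "j \<in> {1..n}" "A j = {x}" using S by blast
      have "j \<noteq> jc" using j c ct \<open>x \<in> {1..t}\<close> by auto
      moreover have "j \<noteq> jd" using j jd False by auto
      ultimately show ?thesis using j unfolding A'_def by auto
    qed
  qed
  show ?thesis using P' J' S' by blast
qed

theorem lemma18:
  fixes n m :: nat and v :: "nat \<Rightarrow> nat \<Rightarrow> real" and i k :: nat
  assumes "chores_instance n m v"
    and "ordered_instance n m v"
    and "i \<in> {1..n}"
    and "k = Max {num_singletons n A | A. mms_partition n m v i A}"
  shows "\<exists>A. mms_partition n m v i A \<and>
           (\<forall>c\<in>{1..min (n-1) k}. \<exists>j\<in>{1..n}. A j = {c})"
proof -
  let ?K = "{num_singletons n A | A. mms_partition n m v i A}"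
  have n1: "n \<ge> 1" using assms(1) unfolding chores_instance_def by simp
  have "?K \<subseteq> {..n}"
  proof
    fix x assume "x \<in> ?K"
    then obtain A where "x = num_singletons n A" by blast
    have "{j\<in>{1..n}. card (A j) = 1} \<subseteq> {1..n}" by blast
    then have "card {j\<in>{1..n}. card (A j) = 1} \<le> card {1..n}" by (intro card_mono) simp_all
    then have "x \<le> card {1..n}" unfolding num_singletons_def \<open>x = num_singletons n A\<close> num_singletons_def .
    then show "x \<in> {..n}" by simp
  qed
  then have fin: "finite ?K" using finite_subset by blast
  have ne: "?K \<noteq> {}" using mms_exists[OF n1] by blast
  have "k \<in> ?K" using Max_in[OF fin ne] assms(4) by simp
  then obtain A0 where A0: "mms_partition n m v i A0" "num_singletons n A0 = k" by blast
  define J0 where "J0 = {j\<in>{1..n}. card (A0 j) = 1}"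
  have cJ: "card J0 = k" using A0(2) unfolding J0_def num_singletons_def by simp
  have "\<forall>t. t \<le> k \<longrightarrow> (\<exists>A. mms_partition n m v i A \<and> {j\<in>{1..n}. card (A j) = 1} = J0 \<and>
           (\<forall>c\<in>{1..t}. \<exists>j\<in>{1..n}. A j = {c}))"
  proof
    fix t show "t \<le> k \<longrightarrow> (\<exists>A. mms_partition n m v i A \<and> {j\<in>{1..n}. card (A j) = 1} = J0 \<and>
           (\<forall>c\<in>{1..t}. \<exists>j\<in>{1..n}. A j = {c}))"
    proof (induction t)
      case 0
      then show ?case using A0(1) unfolding J0_def by auto
    next
      case (Suc t)
      show ?case
      proof
        assume "Suc t \<le> k"
        then obtain A where A: "mms_partition n m v i A" "{j\<in>{1..n}. card (A j) = 1} = J0"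
          "\<forall>c\<in>{1..t}. \<exists>j\<in>{1..n}. A j = {c}" using Suc by auto
        show "\<exists>A. mms_partition n m v i A \<and> {j\<in>{1..n}. card (A j) = 1} = J0 \<and>
           (\<forall>c\<in>{1..Suc t}. \<exists>j\<in>{1..n}. A j = {c})"
          using swap_step[OF assms(1,2,3) A(1,2) _ A(3)] cJ \<open>Suc t \<le> k\<close> by simp
      qed
    qed
  qed
  then have "\<exists>A. mms_partition n m v i A \<and> {j\<in>{1..n}. card (A j) = 1} = J0 \<and>
           (\<forall>c\<in>{1..min (n-1) k}. \<exists>j\<in>{1..n}. A j = {c})" by simp
  then show ?thesis by blast
qed

end
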